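(* Let $H_P$ be a Hermitian operator on a finite-dimensional Hilbert space with orthonormal eigenbasis $\{|\phi_m\rangle\}_{m=0}^{D-1}$, $H_P|\phi_m\rangle = E_m|\phi_m\rangle$, with $E_0 < E_1 \le E_m$ for all $m\ge1$. Let $\tilde E_0,\tilde E_1\in\mathbb{R}$ and $\delta M_0,\delta M_1>0$ satisfy $|\tilde E_0 - E_0| < \delta M_0$ and $|\tilde E_1 - E_1| < \delta M_1$. Let $|\psi\rangle$ be a normalized state and write $|\psi\rangle = \sqrt{1-\epsilon^2}\,|\phi_0\rangle + \sum_{m\neq0}\epsilon_m|\phi_m\rangle$ with real $\epsilon_m$, $\epsilon^2=\sum_{m\ne0}\epsilon_m^2$. If $$\langle\psi|H_P|\psi\rangle < \tfrac12(\tilde E_0+\tilde E_1) - \tfrac12(\delta M_0+\delta M_1),$$ then $\epsilon^2 \le \tfrac12$, and consequently $\bigl(\langle\psi|H_P|\psi\rangle - E_0\bigr)^2 \le \Delta E^2$, where $\Delta E^2 = \langle\psi|H_P^2|\psi\rangle - \langle\psi|H_P|\psi\rangle^2$.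
   Context: $\tilde E_0,\tilde E_1$ are approximate (pre-estimated) values of the ground and first excited energies $E_0,E_1$, with error bounds $\delta M_0,\delta M_1$. *)

theory Defs
  imports "HOL-Analysis.Analysis"
begin

definition cinner :: "complex ^ 'n \<Rightarrow> complex ^ 'n \<Rightarrow> complex" where
  "cinner x y = (\<Sum>i\<in>UNIV. cnj (x $ i) * y $ i)"

definition hermitian :: "complex ^ 'n ^ 'n \<Rightarrow> bool" where
  "hermitian H \<longleftrightarrow> (\<forall>i j. H $ i $ j = cnj (H $ j $ i))"

definition expval :: "complex ^ 'n ^ 'n \<Rightarrow> complex ^ 'n \<Rightarrow> real" where
  "expval A psi = Re (cinner psi (A *v psi))"

end

theory Submission imports Defs begin

lemma cinner_sum_right: "cinner x (sum f S) = (\<Sum>k\<in>S. cinner x (f k))"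
  unfolding cinner_def by (simp add: sum_distrib_left sum_component) (rule sum.swap)
lemma cinner_sum_left: "cinner (sum f S) y = (\<Sum>k\<in>S. cinner (f k) y)"
  unfolding cinner_def by (simp add: sum_distrib_right sum_component) (rule sum.swap)
lemma cinner_scale_right: "cinner x (c *s y) = c * cinner x y"
  unfolding cinner_def by (simp add: sum_distrib_left algebra_simps)
lemma cinner_scale_left: "cinner (c *s x) y = cnj c * cinner x y"
  unfolding cinner_def by (simp add: sum_distrib_left algebra_simps)
lemma mv_scale: "A *v (c *s x) = c *s (A *v (x :: 'a::comm_ring_1 ^ 'n))"
  by (simp add: vec_eq_iff matrix_vector_mult_def sum_distrib_left algebra_simps)
lemma mv_sum: "A *v (sum f S) = (\<Sum>k\<in>S. A *v f k)"
  by (simp add: vec_eq_iff matrix_vector_mult_def sum_distrib_left sum_component) (intro allI sum.swap)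

lemma expand:
  fixes A :: "complex ^ 'n ^ 'n" and phi :: "nat \<Rightarrow> complex ^ 'n"
  assumes orth: "\<forall>m<D. \<forall>k<D. cinner (phi m) (phi k) = (if m = k then 1 else 0)"
    and eig: "\<forall>m<D. A *v phi m = l m *s phi m"
  shows "cinner (\<Sum>m<D. a m *s phi m) (A *v (\<Sum>k<D. a k *s phi k)) = (\<Sum>m<D. cnj (a m) * a m * l m)"
proof -
  have "cinner (\<Sum>m<D. a m *s phi m) (A *v (\<Sum>k<D. a k *s phi k))
     = (\<Sum>m<D. \<Sum>k<D. cnj (a m) * (a k * l k) * cinner (phi m) (phi k))"
    by (simp add: mv_sum mv_scale eig cinner_sum_right cinner_sum_left cinner_scale_left cinner_scale_right
        mult.assoc sum_distrib_left)
     (subst sum.swap, simp add: algebra_simps)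
  also have "\<dots> = (\<Sum>m<D. cnj (a m) * a m * l m)"
  proof (rule sum.cong[OF refl])
    fix m assume m: "m \<in> {..<D}"
    have "(\<Sum>k<D. cnj (a m) * (a k * l k) * cinner (phi m) (phi k))
        = (\<Sum>k<D. if k = m then cnj (a m) * (a k * l k) else 0)"
      using orth m by (intro sum.cong) auto
    also have "\<dots> = cnj (a m) * a m * l m" using m by (simp add: mult.assoc)
    finally show "(\<Sum>k<D. cnj (a m) * (a k * l k) * cinner (phi m) (phi k)) = cnj (a m) * a m * l m" .
  qed
  finally show ?thesis .
qed
theorem mainTheorem3:
  fixes H :: "complex ^ 'n ^ 'n"
    and phi :: "nat \<Rightarrow> complex ^ 'n"
    and E :: "nat \<Rightarrow> real"
    and Et0 Et1 dM0 dM1 :: real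
    and psi :: "complex ^ 'n"
    and eps :: "nat \<Rightarrow> real"
    and D :: nat
  assumes D_def: "D = CARD('n)"
    and D_ge: "D \<ge> 2"
    and herm: "hermitian H"
    and orth: "\<forall>m<D. \<forall>k<D. cinner (phi m) (phi k) = (if m = k then 1 else 0)"
    and eig: "\<forall>m<D. H *v phi m = complex_of_real (E m) *s phi m"
    and gap: "E 0 < E 1"
    and order: "\<forall>m. 1 \<le> m \<and> m < D \<longrightarrow> E 1 \<le> E m"
    and dM0_pos: "dM0 > 0" and dM1_pos: "dM1 > 0"
    and est0: "\<bar>Et0 - E 0\<bar> < dM0"
    and est1: "\<bar>Et1 - E 1\<bar> < dM1"
    and norm: "cinner psi psi = 1"
    and decomp: "psi = complex_of_real (sqrt (1 - (\<Sum>m\<in>{1..<D}. (eps m)\<^sup>2))) *s phi 0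
                      + (\<Sum>m\<in>{1..<D}. complex_of_real (eps m) *s phi m)"
    and hyp: "expval H psi < (Et0 + Et1) / 2 - (dM0 + dM1) / 2"
  shows "(\<Sum>m\<in>{1..<D}. (eps m)\<^sup>2) \<le> 1 / 2
         \<and> (expval H psi - E 0)\<^sup>2 \<le> expval (H ** H) psi - (expval H psi)\<^sup>2"
proof -
  define s where "s = (\<Sum>m\<in>{1..<D}. (eps m)\<^sup>2)"
  define c where "c = sqrt (1 - s)"
  define r where "r m = (if m = 0 then c else eps m)" for m
  have D0: "{..<D} = insert 0 {1..<D}" using D_ge by auto
  have split: "(\<Sum>m<D. f m) = f 0 + (\<Sum>m\<in>{1..<D}. f m)" for f :: "nat \<Rightarrow> 'b::comm_monoid_add"
    by (subst D0, subst sum.insert) auto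
  have psi: "psi = (\<Sum>m<D. complex_of_real (r m) *s phi m)"
    unfolding split using decomp by (simp add: r_def s_def c_def)
  have gen: "cinner psi (A *v psi) = (\<Sum>m<D. complex_of_real ((r m)\<^sup>2 * l m))"
    if "\<forall>m<D. A *v phi m = complex_of_real (l m) *s phi m" for A l
  proof -
    have "cinner psi (A *v psi) = (\<Sum>m<D. cnj (complex_of_real (r m)) * complex_of_real (r m) * complex_of_real (l m))"
      unfolding psi by (rule expand[OF orth that])
    then show ?thesis by (simp add: power2_eq_square)
  qed
  have n1: "(\<Sum>m<D. (r m)\<^sup>2) = 1"
  proof -
    have "cinner psi (mat 1 *v psi) = (\<Sum>m<D. complex_of_real ((r m)\<^sup>2 * 1))"
      by (rule gen) (simp add: matrix_vector_mul_lid)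
    then have "complex_of_real (\<Sum>m<D. (r m)\<^sup>2) = 1" using norm by (simp add: matrix_vector_mul_lid)
    then show ?thesis using of_real_eq_1_iff by blast
  qed
  define mu where "mu = expval H psi"
  have mu: "mu = (\<Sum>m<D. (r m)\<^sup>2 * E m)"
    unfolding mu_def expval_def by (subst gen[OF eig]) (simp only: of_real_sum[symmetric] Re_complex_of_real)
  have eigHH: "\<forall>m<D. (H ** H) *v phi m = complex_of_real ((E m)\<^sup>2) *s phi m"
    using eig by (simp add: matrix_vector_mul_assoc[symmetric] mv_scale power2_eq_square)
  have v2: "expval (H ** H) psi = (\<Sum>m<D. (r m)\<^sup>2 * (E m)\<^sup>2)"
    unfolding expval_def by (subst gen[OF eigHH]) (simp only: of_real_sum[symmetric] Re_complex_of_real)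
  have s0: "s \<ge> 0" unfolding s_def by (simp add: sum_nonneg)
  have cs: "c\<^sup>2 + s = 1" using n1 unfolding split by (simp add: r_def s_def)
  have c2: "c\<^sup>2 = 1 - s"
  proof -
    have "c\<^sup>2 = \<bar>1 - s\<bar>" unfolding c_def power2_eq_square by (rule real_sqrt_mult_self)
    then show ?thesis using cs by (cases "1 - s \<ge> 0") auto
  qed
  have lowsum: "(\<Sum>m\<in>{1..<D}. (eps m)\<^sup>2 * E m) \<ge> s * E 1"
    unfolding s_def sum_distrib_right
    by (rule sum_mono) (use order in \<open>auto intro: mult_left_mono\<close>)
  have muexp: "mu = c\<^sup>2 * E 0 + (\<Sum>m\<in>{1..<D}. (eps m)\<^sup>2 * E m)"
    using mu unfolding split by (simp add: r_def)
  have mulow: "mu \<ge> (1 - s) * E 0 + s * E 1" using muexp lowsum c2 by simp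
  have muup: "mu < (E 0 + E 1) / 2" using hyp est0 est1 unfolding mu_def abs_less_iff by (simp add: field_simps)
  have "s * (E 1 - E 0) < (1/2) * (E 1 - E 0)" using mulow muup by (simp add: algebra_simps)
  then have sh: "s < 1/2" using gap by (simp add: mult_less_cancel_right)
  have muE0: "mu \<ge> E 0"
  proof -
    have "s * E 0 \<le> s * E 1" using s0 gap by (simp add: mult_left_mono)
    then show ?thesis using mulow by (simp add: algebra_simps)
  qed
  have var: "expval (H ** H) psi - mu\<^sup>2 = (\<Sum>m<D. (r m)\<^sup>2 * (E m - mu)\<^sup>2)"
  proof -
    have "(\<Sum>m<D. (r m)\<^sup>2 * (E m - mu)\<^sup>2)
       = (\<Sum>m<D. (r m)\<^sup>2 * (E m)\<^sup>2) - 2 * mu * (\<Sum>m<D. (r m)\<^sup>2 * E m) + mu\<^sup>2 * (\<Sum>m<D. (r m)\<^sup>2)"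
      by (simp add: power2_diff algebra_simps sum.distrib sum_subtractf sum_distrib_left)
    then show ?thesis using v2 mu n1 by (simp add: power2_eq_square)
  qed
  have termb: "(E m - mu)\<^sup>2 \<ge> (mu - E 0)\<^sup>2" if "m \<in> {1..<D}" for m
  proof -
    have "E m - mu \<ge> mu - E 0" using order that muup by auto
    then show ?thesis using muE0 by (intro power_mono) auto
  qed
  have "(\<Sum>m<D. (r m)\<^sup>2 * (E m - mu)\<^sup>2) = c\<^sup>2 * (E 0 - mu)\<^sup>2 + (\<Sum>m\<in>{1..<D}. (eps m)\<^sup>2 * (E m - mu)\<^sup>2)"
    unfolding split by (simp add: r_def)
  also have "\<dots> \<ge> c\<^sup>2 * (mu - E 0)\<^sup>2 + (\<Sum>m\<in>{1..<D}. (eps m)\<^sup>2 * (mu - E 0)\<^sup>2)"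
  proof (rule add_mono)
    show "c\<^sup>2 * (mu - E 0)\<^sup>2 \<le> c\<^sup>2 * (E 0 - mu)\<^sup>2" by (simp add: power2_commute)
    show "(\<Sum>m\<in>{1..<D}. (eps m)\<^sup>2 * (mu - E 0)\<^sup>2) \<le> (\<Sum>m\<in>{1..<D}. (eps m)\<^sup>2 * (E m - mu)\<^sup>2)"
      by (rule sum_mono, rule mult_left_mono, erule termb) simp
  qed
  finally have "expval (H ** H) psi - mu\<^sup>2 \<ge> (c\<^sup>2 + s) * (mu - E 0)\<^sup>2"
    using var by (simp add: s_def sum_distrib_right[symmetric] algebra_simps)
  then have "(mu - E 0)\<^sup>2 \<le> expval (H ** H) psi - mu\<^sup>2" using cs by simp
  then show ?thesis using sh unfolding mu_def s_def by simp
qed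

end
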